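(* For $k\ge 0$ let $p_k(x)=\sqrt{(k+1)/\pi}\,x^k$ (the Bergman orthonormal polynomials of the unit disk), and for $n\ge 0$ define, for $x\in\mathbb{R}$, $$K_n(x,x)=\sum_{k=0}^np_k(x)^2,\quad K_n^{(0,1)}(x,x)=\sum_{k=0}^np_k(x)p_k'(x),\quad K_n^{(1,1)}(x,x)=\sum_{k=0}^np_k'(x)^2,$$ $$\mathcal K_n(x)=\frac{\sqrt{K_n^{(1,1)}(x,x)K_n(x,x)-(K_n^{(0,1)}(x,x))^2}}{K_n(x,x)}.$$ Then $$\lim_{n\to\infty}\mathcal K_n(x)=\begin{cases}\dfrac{\sqrt2}{1-x^2}, & |x|<1,\\[1ex] \dfrac{1}{x^2-1}, & |x|>1,\end{cases}$$ where the convergence holds locally uniformly on $(-1,1)$ and on $\{x\in\mathbb{R}:|x|>1\}$; moreover $$\mathcal K_n(\pm1)=\frac13\sqrt{\frac{n(n+3)}{2}}.$$ *)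

theory Defs
  imports "HOL-Analysis.Analysis"
begin

definition bp :: "nat \<Rightarrow> real \<Rightarrow> real" where
  "bp k x = sqrt (real (k + 1) / pi) * x ^ k"

definition Kn :: "nat \<Rightarrow> real \<Rightarrow> real" where
  "Kn n x = (\<Sum>k=0..n. (bp k x)^2)"

definition Kn01 :: "nat \<Rightarrow> real \<Rightarrow> real" where
  "Kn01 n x = (\<Sum>k=0..n. bp k x * deriv (bp k) x)"

definition Kn11 :: "nat \<Rightarrow> real \<Rightarrow> real" where
  "Kn11 n x = (\<Sum>k=0..n. (deriv (bp k) x)^2)"

definition curvK :: "nat \<Rightarrow> real \<Rightarrow> real" where
  "curvK n x = sqrt (Kn11 n x * Kn n x - (Kn01 n x)^2) / Kn n x"

end

theory Submission
  imports Defs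
begin


lemma deriv_bp: "deriv (bp k) x = sqrt (real (k+1) / pi) * (real k * x ^ (k - 1))"
proof -
  have "((\<lambda>x. sqrt (real (k+1) / pi) * x ^ k) has_real_derivative sqrt (real (k+1) / pi) * (real k * x ^ (k - 1))) (at x)"
    by (auto intro!: derivative_eq_intros)
  then show ?thesis unfolding bp_def[abs_def] by (rule DERIV_imp_deriv)
qed

lemma sq_sqrt_k: "(sqrt (real (k+1) / pi))^2 = real (k+1) / pi"
  by simp

lemma pi_Kn: "pi * Kn n x = (\<Sum>k=0..n. real (k+1) * (x^2)^k)"
  unfolding Kn_def bp_def sum_distrib_left
  by (rule sum.cong) (auto simp: power_mult_distrib power_mult[symmetric] mult.commute)

lemma pi_Kn01: "pi * Kn01 n x = (\<Sum>k=0..n. real (k+1) * real k * x ^ k * x^(k-1))"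
  unfolding Kn01_def bp_def deriv_bp sum_distrib_left
  by (rule sum.cong) (auto simp: power_mult_distrib field_simps)

lemma pi_Kn11: "pi * Kn11 n x = (\<Sum>k=0..n. real (k+1) * (real k)^2 * (x^(k-1))^2)"
  unfolding Kn11_def deriv_bp sum_distrib_left
  by (rule sum.cong) (auto simp: power_mult_distrib field_simps)

definition SS :: "nat \<Rightarrow> nat \<Rightarrow> real \<Rightarrow> real" where
  "SS i n t = (\<Sum>k=0..n. real k ^ i * t ^ k)"

lemma SS_0 [simp]: "SS i 0 t = (if i = 0 then 1 else 0)"
  by (simp add: SS_def)

lemma SS_Suc: "SS i (Suc n) t = SS i n t + real (Suc n) ^ i * t ^ Suc n"
  by (simp add: SS_def)

lemma SS0_rec: "(1 - t) * SS 0 n t = 1 - t^(n+1)"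
proof (induction n)
  case (Suc n)
  have "(1-t) * SS 0 (Suc n) t = (1-t)*SS 0 n t + (1-t)*t^(n+1)"
    by (simp add: SS_Suc algebra_simps)
  also have "\<dots> = 1 - t^(n+2)" using Suc by (simp add: algebra_simps)
  finally show ?case by simp
qed simp

lemma SS1_rec: "(1 - t) * SS 1 n t = SS 0 n t - 1 - real n * t^(n+1)"
  by (induction n) (auto simp: SS_Suc algebra_simps)

lemma SS2_rec: "(1 - t) * SS 2 n t = 2 * SS 1 n t - SS 0 n t + 1 - real n ^ 2 * t^(n+1)"
  by (induction n) (auto simp: SS_Suc algebra_simps power2_eq_square)

lemma SS3_rec: "(1 - t) * SS 3 n t = 3 * SS 2 n t - 3 * SS 1 n t + SS 0 n t - 1 - real n ^ 3 * t^(n+1)"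
  by (induction n) (auto simp: SS_Suc algebra_simps power2_eq_square power3_eq_cube)

lemma K_form1: "pi * Kn n x = SS 1 n (x^2) + SS 0 n (x^2)"
  unfolding pi_Kn SS_def by (simp add: sum.distrib[symmetric] algebra_simps)

lemma K01_form1: "pi * Kn01 n x = x * (SS 2 n (x^2) + 3 * SS 1 n (x^2) + 2 * SS 0 n (x^2)
      - real (n+2) * real (n+1) * (x^2)^n)"
  unfolding pi_Kn01
proof (induction n)
  case 0 then show ?case by simp
next
  case (Suc n)
  have e: "x ^ Suc n * x ^ n = x * (x^2)^n"
    by (simp add: power2_eq_square power_mult_distrib)
  have e2: "(x^2)^(Suc n) = x^2 * (x^2)^n" by simp
  show ?case using Suc
    by (simp add: SS_Suc e e2 algebra_simps power2_eq_square)
qed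

lemma K11_form1: "pi * Kn11 n x = SS 3 n (x^2) + 4 * SS 2 n (x^2) + 5 * SS 1 n (x^2) + 2 * SS 0 n (x^2)
      - real (n+2) * (real (n+1))^2 * (x^2)^n"
  unfolding pi_Kn11
proof (induction n)
  case 0 then show ?case by simp
next
  case (Suc n)
  have e: "(x ^ n)^2 = (x^2)^n"
    by (simp add: power_mult[symmetric] mult.commute)
  have e2: "(x^2)^(Suc n) = x^2 * (x^2)^n" by simp
  show ?case using Suc
    by (simp add: SS_Suc e e2 algebra_simps power2_eq_square power3_eq_cube)
qed

lemma curvK_form1:
  fixes x :: real
  defines "t \<equiv> x^2"
  shows "curvK n x = sqrt ((SS 3 n t + 4 * SS 2 n t + 5 * SS 1 n t + 2 * SS 0 n t
      - real (n+2) * (real (n+1))^2 * t^n) * (SS 1 n t + SS 0 n t)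
     - t * (SS 2 n t + 3 * SS 1 n t + 2 * SS 0 n t - real (n+2) * real (n+1) * t^n)^2)
     / (SS 1 n t + SS 0 n t)"
proof -
  define A where "A = SS 1 n t + SS 0 n t"
  define B where "B = SS 2 n t + 3 * SS 1 n t + 2 * SS 0 n t - real (n+2) * real (n+1) * t^n"
  define C where "C = SS 3 n t + 4 * SS 2 n t + 5 * SS 1 n t + 2 * SS 0 n t
      - real (n+2) * (real (n+1))^2 * t^n"
  have p: "pi \<noteq> 0" by simp
  have hK: "Kn n x = A / pi" using K_form1[of n x] p unfolding A_def t_def by (simp add: field_simps)
  have h01: "Kn01 n x = x * B / pi" using K01_form1[of n x] p unfolding B_def t_def by (simp add: field_simps)
  have h11: "Kn11 n x = C / pi" using K11_form1[of n x] p unfolding C_def t_def by (simp add: field_simps)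
  have "Kn11 n x * Kn n x - (Kn01 n x)^2 = (C * A - t * B^2) / pi^2"
    unfolding hK h01 h11 t_def by (simp add: field_simps power2_eq_square)
  then have "sqrt (Kn11 n x * Kn n x - (Kn01 n x)^2) = sqrt (C * A - t * B^2) / pi"
    by (simp add: real_sqrt_divide)
  then show ?thesis unfolding curvK_def hK A_def[symmetric] B_def[symmetric] C_def[symmetric]
    using p by (simp add: field_simps)
qed

definition FA :: "nat \<Rightarrow> real \<Rightarrow> real" where "FA n t = (\<Sum>k=0..n. real (k+1) * t^k)"
definition FB :: "nat \<Rightarrow> real \<Rightarrow> real" where "FB n t = (\<Sum>k=0..n. real (k+1) * real k * t^k)"
definition FC :: "nat \<Rightarrow> real \<Rightarrow> real" where "FC n t = (\<Sum>k=0..n. real (k+1) * (real k)^2 * t^k)"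

lemma FA_K: "pi * Kn n x = FA n (x^2)"
  unfolding pi_Kn FA_def ..

lemma FB_K: "x * (pi * Kn01 n x) = FB n (x^2)"
  unfolding pi_Kn01 FB_def sum_distrib_left
proof (rule sum.cong)
  fix k assume "k \<in> {0..n}"
  show "x * (real (k + 1) * real k * x ^ k * x ^ (k - 1)) = real (k + 1) * real k * (x\<^sup>2) ^ k"
  proof (cases k)
    case (Suc j)
    then show ?thesis by (simp add: power2_eq_square power_mult_distrib algebra_simps)
  qed simp
qed simp

lemma FC_K: "x^2 * (pi * Kn11 n x) = FC n (x^2)"
  unfolding pi_Kn11 FC_def sum_distrib_left
proof (rule sum.cong)
  fix k assume "k \<in> {0..n}"
  show "x^2 * (real (k + 1) * (real k)^2 * (x ^ (k - 1))^2) = real (k + 1) * (real k)^2 * (x\<^sup>2) ^ k"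
  proof (cases k)
    case (Suc j)
    then show ?thesis by (simp add: power2_eq_square power_mult_distrib algebra_simps)
  qed simp
qed simp

lemma curvK_form2:
  assumes "x \<noteq> 0"
  shows "curvK n x = sqrt ((FC n (x^2) * FA n (x^2) - (FB n (x^2))^2) / x^2) / FA n (x^2)"
proof -
  have p: "pi \<noteq> 0" by simp
  have hK: "Kn n x = FA n (x^2) / pi" using FA_K[of n x] p by (simp add: field_simps)
  have h01: "Kn01 n x = FB n (x^2) / (pi * x)" using FB_K[of x n] p assms by (simp add: field_simps)
  have h11: "Kn11 n x = FC n (x^2) / (pi * x^2)" using FC_K[of x n] p assms by (simp add: field_simps)
  define Y where "Y = (FC n (x^2) * FA n (x^2) - (FB n (x^2))^2) / x^2"
  have "Kn11 n x * Kn n x - (Kn01 n x)^2 = Y / pi^2"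
    unfolding hK h01 h11 Y_def using assms by (simp add: field_simps power2_eq_square)
  then have "sqrt (Kn11 n x * Kn n x - (Kn01 n x)^2) = sqrt Y / pi"
    by (simp add: real_sqrt_divide)
  then show ?thesis unfolding curvK_def hK Y_def[symmetric]
    using p by (simp add: field_simps)
qed

lemma refl_sum:
  fixes t :: real and g :: "nat \<Rightarrow> real"
  assumes "t \<noteq> 0"
  shows "(\<Sum>k=0..n. g k * t^k) = t^n * (\<Sum>a=0..n. g (n-a) * (1/t)^a)"
proof -
  have "(\<Sum>k=0..n. g k * t^k) = (\<Sum>a=0..n. g (n + 0 - a) * t^(n + 0 - a))"
    by (rule sum.atLeastAtMost_rev)
  also have "\<dots> = (\<Sum>a=0..n. t^n * (g (n-a) * (1/t)^a))"
  proof (rule sum.cong)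
    fix a assume "a \<in> {0..n}"
    then have "a \<le> n" by simp
    then have "t^n = t^(n-a+a)" by simp
    also have "\<dots> = t^(n-a) * t^a" by (rule power_add)
    finally have "t^n = t^(n-a) * t^a" .
    then show "g (n + 0 - a) * t^(n + 0 - a) = t^n * (g (n-a) * (1/t)^a)"
      using assms by (simp add: power_one_over field_simps)
  qed simp
  finally show ?thesis by (simp add: sum_distrib_left)
qed

lemma FA_refl:
  assumes "t \<noteq> 0"
  shows "FA n t = t^n * (real (n+1) * SS 0 n (1/t) - SS 1 n (1/t))"
proof -
  have "FA n t = t^n * (\<Sum>a=0..n. real (n - a + 1) * (1/t)^a)"
    unfolding FA_def using refl_sum[OF assms, of "\<lambda>k. real (k+1)"] by simp
  also have "(\<Sum>a=0..n. real (n - a + 1) * (1/t)^a) = real (n+1) * SS 0 n (1/t) - SS 1 n (1/t)"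
    unfolding SS_def sum_distrib_left sum_subtractf[symmetric]
    by (rule sum.cong) (auto simp: of_nat_diff algebra_simps)
  finally show ?thesis .
qed

lemma FB_refl:
  assumes "t \<noteq> 0"
  shows "FB n t = t^n * (real (n+1) * real n * SS 0 n (1/t) - (real (n+1) + real n) * SS 1 n (1/t)
     + SS 2 n (1/t))"
proof -
  have "FB n t = t^n * (\<Sum>a=0..n. real (n - a + 1) * real (n - a) * (1/t)^a)"
    unfolding FB_def using refl_sum[OF assms, of "\<lambda>k. real (k+1) * real k"] by simp
  also have "(\<Sum>a=0..n. real (n - a + 1) * real (n - a) * (1/t)^a) =
      real (n+1) * real n * SS 0 n (1/t) - (real (n+1) + real n) * SS 1 n (1/t) + SS 2 n (1/t)"
  proof -
    have pw: "real (n - a + 1) * real (n - a) * (1/t)^a =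
       real (n+1) * real n * (real a ^ 0 * (1/t)^a) - (real (n+1) + real n) * (real a ^ 1 * (1/t)^a)
     + (real a ^ 2 * (1/t)^a)" if "a \<in> {0..n}" for a
    proof -
      have h: "real (n - a) = real n - real a" using that by (simp add: of_nat_diff)
      show ?thesis unfolding of_nat_add h of_nat_1 by (simp add: algebra_simps power2_eq_square)
    qed
    have "(\<Sum>a=0..n. real (n - a + 1) * real (n - a) * (1/t)^a) = (\<Sum>a=0..n. 
       real (n+1) * real n * (real a ^ 0 * (1/t)^a) - (real (n+1) + real n) * (real a ^ 1 * (1/t)^a)
     + (real a ^ 2 * (1/t)^a))"
      by (rule sum.cong[OF refl], rule pw, assumption)
    then show ?thesis unfolding SS_def
      by (simp only: sum.distrib sum_subtractf sum_distrib_left)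
  qed
  finally show ?thesis .
qed

lemma FC_refl:
  assumes "t \<noteq> 0"
  shows "FC n t = t^n * (real (n+1) * (real n)^2 * SS 0 n (1/t)
     - ((real n)^2 + 2 * real (n+1) * real n) * SS 1 n (1/t)
     + (real (n+1) + 2 * real n) * SS 2 n (1/t) - SS 3 n (1/t))"
proof -
  have "FC n t = t^n * (\<Sum>a=0..n. real (n - a + 1) * (real (n - a))^2 * (1/t)^a)"
    unfolding FC_def using refl_sum[OF assms, of "\<lambda>k. real (k+1) * (real k)^2"] by simp
  also have "(\<Sum>a=0..n. real (n - a + 1) * (real (n - a))^2 * (1/t)^a) =
      real (n+1) * (real n)^2 * SS 0 n (1/t)
     - ((real n)^2 + 2 * real (n+1) * real n) * SS 1 n (1/t)
     + (real (n+1) + 2 * real n) * SS 2 n (1/t) - SS 3 n (1/t)"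
  proof -
    have pw: "real (n - a + 1) * (real (n - a))^2 * (1/t)^a =
       real (n+1) * (real n)^2 * (real a ^ 0 * (1/t)^a)
     - ((real n)^2 + 2 * real (n+1) * real n) * (real a ^ 1 * (1/t)^a)
     + (real (n+1) + 2 * real n) * (real a ^ 2 * (1/t)^a) - (real a ^ 3 * (1/t)^a)" if "a \<in> {0..n}" for a
    proof -
      have h: "real (n - a) = real n - real a" using that by (simp add: of_nat_diff)
      show ?thesis unfolding of_nat_add h of_nat_1 by (simp add: algebra_simps power2_eq_square power3_eq_cube)
    qed
    have "(\<Sum>a=0..n. real (n - a + 1) * (real (n - a))^2 * (1/t)^a) = (\<Sum>a=0..n. real (n+1) * (real n)^2 * (real a ^ 0 * (1/t)^a)
     - ((real n)^2 + 2 * real (n+1) * real n) * (real a ^ 1 * (1/t)^a)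
     + (real (n+1) + 2 * real n) * (real a ^ 2 * (1/t)^a) - (real a ^ 3 * (1/t)^a))"
      by (rule sum.cong[OF refl], rule pw, assumption)
    then show ?thesis unfolding SS_def
      by (simp only: sum.distrib sum_subtractf sum_distrib_left)
  qed
  finally show ?thesis .
qed



lemma tendsto_npow:
  assumes "0 \<le> \<rho>" "\<rho> < 1"
  shows "(\<lambda>n. real n ^ i * \<rho> ^ n) \<longlonglongrightarrow> 0"
proof (cases "i = 0")
  case True then show ?thesis using assms by (simp add: LIMSEQ_power_zero)
next
  case False
  define \<sigma> where "\<sigma> = root i \<rho>"
  have \<sigma>0: "0 \<le> \<sigma>" using assms by (simp add: \<sigma>_def real_root_ge_zero)
  have \<sigma>1: "\<sigma> < 1" using assms False by (simp add: \<sigma>_def)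
  have \<sigma>i: "\<sigma> ^ i = \<rho>" using assms False by (simp add: \<sigma>_def real_root_pow_pos2)
  have "(\<lambda>n. (real n * \<sigma> ^ n) ^ i) \<longlonglongrightarrow> 0 ^ i"
    by (intro tendsto_power) (use powser_times_n_limit_0[of \<sigma>] \<sigma>0 \<sigma>1 in auto)
  moreover have "(\<lambda>n. (real n * \<sigma> ^ n) ^ i) = (\<lambda>n. real n ^ i * \<rho> ^ n)"
  proof
    fix n
    have "(\<sigma>^n)^i = (\<sigma>^i)^n" by (simp add: power_mult[symmetric] mult.commute)
    then show "(real n * \<sigma> ^ n) ^ i = real n ^ i * \<rho> ^ n" by (simp add: power_mult_distrib \<sigma>i)
  qed
  ultimately show ?thesis using False by (simp add: zero_power)
qed

lemma ul_bound:
  fixes f :: "nat \<Rightarrow> 'a \<Rightarrow> real" and c :: "nat \<Rightarrow> real"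
  assumes "\<And>n t. t \<in> T \<Longrightarrow> \<bar>f n t - l t\<bar> \<le> c n" "c \<longlonglongrightarrow> 0"
  shows "uniform_limit T f l sequentially"
  unfolding uniform_limit_sequentially_iff
proof (intro allI impI)
  fix e :: real assume "e > 0"
  from LIMSEQ_D[OF assms(2) this] obtain N where N: "\<forall>n\<ge>N. norm (c n - 0) < e" by blast
  have "\<forall>n\<ge>N. \<forall>x\<in>T. dist (f n x) (l x) < e"
  proof (intro allI impI ballI)
    fix n x assume n: "n \<ge> N" and x: "x \<in> T"
    have "\<bar>f n x - l x\<bar> \<le> c n" using x by (rule assms(1))
    moreover have "\<bar>c n\<bar> < e" using N n by simp
    ultimately show "dist (f n x) (l x) < e" by (simp add: dist_real_def)
  qed
  then show "\<exists>N. \<forall>n\<ge>N. \<forall>x\<in>T. dist (f n x) (l x) < e" by blast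
qed

lemma ul_seq:
  fixes c :: "nat \<Rightarrow> real"
  assumes "c \<longlonglongrightarrow> l"
  shows "uniform_limit T (\<lambda>n t. c n) (\<lambda>t. l) sequentially"
proof (rule ul_bound)
  show "(\<lambda>n. \<bar>c n - l\<bar>) \<longlonglongrightarrow> 0"
    using tendsto_rabs[OF tendsto_diff[OF assms tendsto_const[of l]]] by simp
qed simp

lemma ul_npow:
  assumes "0 \<le> \<rho>" "\<rho> < 1"
  shows "uniform_limit {0..\<rho>} (\<lambda>n t. real n ^ i * t^(n+j)) (\<lambda>_. 0) sequentially"
proof (rule ul_bound)
  fix n t assume t: "t \<in> {0..\<rho>}"
  have "t^(n+j) \<le> t^n" using t assms by (intro power_decreasing) auto
  also have "\<dots> \<le> \<rho>^n" using t by (intro power_mono) auto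
  finally have "t^(n+j) \<le> \<rho>^n" .
  then show "\<bar>real n ^ i * t^(n+j) - 0\<bar> \<le> real n ^ i * \<rho>^n"
    using t by (simp add: mult_left_mono)
qed (rule tendsto_npow[OF assms])

lemma bnd_cont:
  fixes f :: "real \<Rightarrow> real"
  assumes "continuous_on {a..b} f"
  shows "bounded (f ` {a..b})"
  by (intro compact_imp_bounded compact_continuous_image assms compact_Icc)

lemma ul_div1:
  fixes f :: "nat \<Rightarrow> real \<Rightarrow> real"
  assumes "uniform_limit {0..\<rho>} f l sequentially" "continuous_on {0..\<rho>} l" "\<rho> < 1"
  shows "uniform_limit {0..\<rho>} (\<lambda>n t. f n t / (1 - t)) (\<lambda>t. l t / (1 - t)) sequentially"
proof (rule uniform_lim_divide[OF assms(1) uniform_limit_const bnd_cont[OF assms(2)]])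
  show "0 < 1 - \<rho>" using assms by simp
  fix t assume "t \<in> {0..\<rho>}"
  then show "1 - \<rho> \<le> norm (1 - t)" by auto
qed

definition "L0 t = 1 / (1 - (t::real))"
definition "L1 t = t / (1 - (t::real))^2"
definition "L2 t = t * (1 + t) / (1 - (t::real))^3"
definition "L3 t = t * (1 + 4*t + t^2) / (1 - (t::real))^4"

lemma cont_L:
  assumes "\<rho> < 1"
  shows "continuous_on {0..\<rho>} L0" "continuous_on {0..\<rho>} L1"
        "continuous_on {0..\<rho>} L2" "continuous_on {0..\<rho>} L3"
  using assms unfolding L0_def[abs_def] L1_def[abs_def] L2_def[abs_def] L3_def[abs_def]
  by (auto intro!: continuous_intros)

lemma ul_SS0:
  assumes "0 \<le> \<rho>" "\<rho> < 1"
  shows "uniform_limit {0..\<rho>} (SS 0) L0 sequentially"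
proof -
  have "uniform_limit {0..\<rho>} (\<lambda>n t. (1 - real n ^ 0 * t^(n+1)) / (1 - t)) (\<lambda>t. (1 - 0) / (1 - t)) sequentially"
    by (intro ul_div1 uniform_limit_intros ul_npow assms continuous_intros)
  moreover have "SS 0 n t = (1 - real n ^ 0 * t^(n+1)) / (1 - t)" if "t \<in> {0..\<rho>}" for n t
    using SS0_rec[of t n] that assms by (simp add: field_simps)
  ultimately show ?thesis
    by (subst uniform_limit_cong'[where g="\<lambda>n t. (1 - real n ^ 0 * t^(n+1)) / (1 - t)"
            and i = "\<lambda>t. (1 - 0) / (1 - t)"]) (auto simp: L0_def)
qed

lemma ul_SS1:
  assumes "0 \<le> \<rho>" "\<rho> < 1"
  shows "uniform_limit {0..\<rho>} (SS 1) L1 sequentially"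
proof -
  have "uniform_limit {0..\<rho>} (\<lambda>n t. (SS 0 n t - 1 - real n ^ 1 * t^(n+1)) / (1 - t))
     (\<lambda>t. (L0 t - 1 - 0) / (1 - t)) sequentially"
    by (intro ul_div1 uniform_limit_intros ul_npow ul_SS0 assms continuous_intros cont_L)
  moreover have "SS 1 n t = (SS 0 n t - 1 - real n ^ 1 * t^(n+1)) / (1 - t)" if "t \<in> {0..\<rho>}" for n t
    using SS1_rec[of t n] that assms by (simp add: field_simps)
  moreover have "L1 t = (L0 t - 1 - 0) / (1 - t)" if "t \<in> {0..\<rho>}" for t
  proof -
    have "t \<noteq> 1" using that assms by auto
    define u where "u = 1 - t"
    have ne: "u \<noteq> 0" using \<open>t \<noteq> 1\<close> by (simp add: u_def)
    have t: "t = 1 - u" by (simp add: u_def)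
    show ?thesis unfolding L0_def L1_def t using ne 
      by (simp add: field_simps) algebra
  qed
  ultimately show ?thesis
    by (subst uniform_limit_cong'[where g="\<lambda>n t. (SS 0 n t - 1 - real n ^ 1 * t^(n+1)) / (1 - t)"
            and i = "\<lambda>t. (L0 t - 1 - 0) / (1 - t)"]) auto
qed

lemma ul_SS2:
  assumes "0 \<le> \<rho>" "\<rho> < 1"
  shows "uniform_limit {0..\<rho>} (SS 2) L2 sequentially"
proof -
  have "uniform_limit {0..\<rho>} (\<lambda>n t. (2 * SS 1 n t - SS 0 n t + 1 - real n ^ 2 * t^(n+1)) / (1 - t))
     (\<lambda>t. (2 * L1 t - L0 t + 1 - 0) / (1 - t)) sequentially"
    by (intro ul_div1 uniform_limit_intros ul_npow ul_SS0 ul_SS1 assms continuous_intros cont_L)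
  moreover have "SS 2 n t = (2 * SS 1 n t - SS 0 n t + 1 - real n ^ 2 * t^(n+1)) / (1 - t)" if "t \<in> {0..\<rho>}" for n t
    using SS2_rec[of t n] that assms by (simp add: field_simps)
  moreover have "L2 t = (2 * L1 t - L0 t + 1 - 0) / (1 - t)" if "t \<in> {0..\<rho>}" for t
  proof -
    have "t \<noteq> 1" using that assms by auto
    define u where "u = 1 - t"
    have ne: "u \<noteq> 0" using \<open>t \<noteq> 1\<close> by (simp add: u_def)
    have t: "t = 1 - u" by (simp add: u_def)
    show ?thesis unfolding L0_def L1_def L2_def t using ne 
      by (simp add: field_simps) algebra
  qed
  ultimately show ?thesis
    by (subst uniform_limit_cong'[where g="\<lambda>n t. (2 * SS 1 n t - SS 0 n t + 1 - real n ^ 2 * t^(n+1)) / (1 - t)"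
            and i = "\<lambda>t. (2 * L1 t - L0 t + 1 - 0) / (1 - t)"]) auto
qed

lemma ul_SS3:
  assumes "0 \<le> \<rho>" "\<rho> < 1"
  shows "uniform_limit {0..\<rho>} (SS 3) L3 sequentially"
proof -
  have "uniform_limit {0..\<rho>} (\<lambda>n t. (3 * SS 2 n t - 3 * SS 1 n t + SS 0 n t - 1 - real n ^ 3 * t^(n+1)) / (1 - t))
     (\<lambda>t. (3 * L2 t - 3 * L1 t + L0 t - 1 - 0) / (1 - t)) sequentially"
    by (intro ul_div1 uniform_limit_intros ul_npow ul_SS0 ul_SS1 ul_SS2 assms continuous_intros cont_L)
  moreover have "SS 3 n t = (3 * SS 2 n t - 3 * SS 1 n t + SS 0 n t - 1 - real n ^ 3 * t^(n+1)) / (1 - t)" if "t \<in> {0..\<rho>}" for n t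
    using SS3_rec[of t n] that assms by (simp add: field_simps)
  moreover have "L3 t = (3 * L2 t - 3 * L1 t + L0 t - 1 - 0) / (1 - t)" if "t \<in> {0..\<rho>}" for t
  proof -
    have "t \<noteq> 1" using that assms by auto
    define u where "u = 1 - t"
    have ne: "u \<noteq> 0" using \<open>t \<noteq> 1\<close> by (simp add: u_def)
    have t: "t = 1 - u" by (simp add: u_def)
    show ?thesis unfolding L0_def L1_def L2_def L3_def t using ne 
      by (simp add: field_simps) algebra
  qed
  ultimately show ?thesis
    by (subst uniform_limit_cong'[where g="\<lambda>n t. (3 * SS 2 n t - 3 * SS 1 n t + SS 0 n t - 1 - real n ^ 3 * t^(n+1)) / (1 - t)"
            and i = "\<lambda>t. (3 * L2 t - 3 * L1 t + L0 t - 1 - 0) / (1 - t)"]) auto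
qed



lemma ul_eq:
  assumes "uniform_limit T f l F" "\<And>n t. t \<in> T \<Longrightarrow> f n t = g n t" "\<And>t. t \<in> T \<Longrightarrow> l t = m t"
  shows "uniform_limit T g m F"
  using assms uniform_limit_cong'[of T f g l m F] by (metis (no_types, lifting))

lemma ul_mult:
  fixes f g :: "nat \<Rightarrow> real \<Rightarrow> real"
  assumes "uniform_limit {a..b} f l F" "uniform_limit {a..b} g m F"
    "continuous_on {a..b} l" "continuous_on {a..b} m"
  shows "uniform_limit {a..b} (\<lambda>n t. f n t * g n t) (\<lambda>t. l t * m t) F"
  by (rule uniform_lim_mult[OF assms(1,2) bnd_cont[OF assms(3)] bnd_cont[OF assms(4)]])

lemma sqrt_diff_le: "\<bar>sqrt a - sqrt b\<bar> \<le> 2 * sqrt \<bar>a - b\<bar>"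
proof -
  have nn: "\<bar>sqrt a - sqrt b\<bar> \<le> sqrt \<bar>a - b\<bar>" if "0 \<le> a" "0 \<le> b" for a b :: real
  proof (cases "b \<le> a")
    case True
    have "sqrt a = sqrt (b + (a - b))" by simp
    also have "\<dots> \<le> sqrt b + sqrt (a - b)" using that True by (intro sqrt_add_le_add_sqrt) auto
    finally show ?thesis using True by (simp add: real_sqrt_le_mono)
  next
    case False
    have "sqrt b = sqrt (a + (b - a))" by simp
    also have "\<dots> \<le> sqrt a + sqrt (b - a)" using that False by (intro sqrt_add_le_add_sqrt) auto
    finally show ?thesis using False by (simp add: real_sqrt_le_mono abs_minus_commute)
  qed
  have mix: "\<bar>sqrt a - sqrt b\<bar> \<le> 2 * sqrt \<bar>a - b\<bar>" if "0 \<le> a" "b \<le> 0" for a b :: real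
  proof -
    have "sqrt a \<le> sqrt \<bar>a - b\<bar>" using that by (intro real_sqrt_le_mono) auto
    moreover have "sqrt (-b) \<le> sqrt \<bar>a - b\<bar>" using that by (intro real_sqrt_le_mono) auto
    moreover have "sqrt b \<le> 0" using that by simp
    moreover have "0 \<le> sqrt a" using that by simp
    moreover have "sqrt (-b) = - sqrt b" by (rule real_sqrt_minus)
    ultimately show ?thesis by (smt (verit))
  qed
  show ?thesis
  proof (cases "0 \<le> a")
    case a: True
    show ?thesis
    proof (cases "0 \<le> b")
      case True then show ?thesis using nn[OF a True] by (smt (verit) real_sqrt_ge_zero)
    next
      case False then show ?thesis using mix[OF a] by simp
    qed
  next
    case a: False
    show ?thesis
    proof (cases "0 \<le> b")
      case True then show ?thesis using mix[OF True, of a] a by (simp add: abs_minus_commute)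
    next
      case False
      have "\<bar>sqrt (-a) - sqrt (-b)\<bar> \<le> sqrt \<bar>(-a) - (-b)\<bar>" using a False by (intro nn) auto
      then have "\<bar>sqrt a - sqrt b\<bar> \<le> sqrt \<bar>a - b\<bar>" by (simp add: real_sqrt_minus abs_minus_commute)
      then show ?thesis by (smt (verit) real_sqrt_ge_zero abs_ge_zero)
    qed
  qed
qed

lemma sqrt_unif_cont: "uniformly_continuous_on UNIV sqrt"
  unfolding uniformly_continuous_on_def
proof (intro allI impI)
  fix e :: real assume e: "e > 0"
  show "\<exists>d>0. \<forall>x\<in>UNIV. \<forall>x'\<in>UNIV. dist x' x < d \<longrightarrow> dist (sqrt x') (sqrt x) < e"
  proof (intro exI[of _ "(e/2)^2"] conjI ballI impI)
    show "0 < (e/2)^2" using e by simp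
    fix x x' :: real assume "dist x' x < (e/2)^2"
    then have "sqrt \<bar>x' - x\<bar> < sqrt ((e/2)^2)" by (intro real_sqrt_less_mono) (simp add: dist_real_def)
    also have "\<dots> = e/2" using e by simp
    finally have h: "sqrt \<bar>x' - x\<bar> < e/2" .
    show "dist (sqrt x') (sqrt x) < e"
      unfolding dist_real_def using sqrt_diff_le[of x' x] h by linarith
  qed
qed

lemma ul_sqrt:
  assumes "uniform_limit T f l F"
  shows "uniform_limit T (\<lambda>n t. sqrt (f n t)) (\<lambda>t. sqrt (l t)) F"
  by (rule uniform_limit_compose_uniformly_continuous_on[OF assms sqrt_unif_cont]) auto

definition "AA n t = SS 1 n t + SS 0 n t"
definition "BB n t = SS 2 n t + 3 * SS 1 n t + 2 * SS 0 n t - real (n+2) * real (n+1) * t^n"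
definition "CC n t = SS 3 n t + 4 * SS 2 n t + 5 * SS 1 n t + 2 * SS 0 n t
      - real (n+2) * (real (n+1))^2 * t^n"

lemma curvK_AA: "curvK n x = sqrt (CC n (x^2) * AA n (x^2) - x^2 * (BB n (x^2))^2) / AA n (x^2)"
  unfolding AA_def BB_def CC_def by (rule curvK_form1)

lemma region1_t:
  assumes "0 \<le> \<rho>" "\<rho> < 1"
  shows "uniform_limit {0..\<rho>} (\<lambda>n t. sqrt (CC n t * AA n t - t * (BB n t)^2) / AA n t)
           (\<lambda>t. sqrt 2 / (1 - t)) sequentially"
proof -
  let ?U = "{0..\<rho>}"
  note L = ul_SS0[OF assms] ul_SS1[OF assms] ul_SS2[OF assms] ul_SS3[OF assms]
  note cL = cont_L[OF assms(2)]
  have hA: "uniform_limit ?U AA (\<lambda>t. L1 t + L0 t) sequentially"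
    unfolding AA_def[abs_def] by (intro uniform_limit_intros L)
  have "uniform_limit ?U (\<lambda>n t. real n ^ 2 * t^(n+0) + 3 * (real n ^ 1 * t^(n+0)) + 2 * (real n ^ 0 * t^(n+0)))
     (\<lambda>t. 0 + 3 * 0 + 2 * 0) sequentially"
    by (intro uniform_limit_intros ul_npow assms)
  then have hp1: "uniform_limit ?U (\<lambda>n t. real (n+2) * real (n+1) * t^n) (\<lambda>t. 0) sequentially"
    by (rule ul_eq) (auto simp: algebra_simps power2_eq_square)
  have "uniform_limit ?U (\<lambda>n t. real n ^ 3 * t^(n+0) + 4 * (real n ^ 2 * t^(n+0)) + 5 * (real n ^ 1 * t^(n+0)) + 2 * (real n ^ 0 * t^(n+0)))
     (\<lambda>t. 0 + 4 * 0 + 5 * 0 + 2 * 0) sequentially"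
    by (intro uniform_limit_intros ul_npow assms)
  then have hp2: "uniform_limit ?U (\<lambda>n t. real (n+2) * (real (n+1))^2 * t^n) (\<lambda>t. 0) sequentially"
    by (rule ul_eq) (auto simp: algebra_simps power2_eq_square power3_eq_cube)
  have hB: "uniform_limit ?U BB (\<lambda>t. L2 t + 3 * L1 t + 2 * L0 t - 0) sequentially"
    unfolding BB_def[abs_def] by (intro uniform_limit_intros L hp1)
  have hC: "uniform_limit ?U CC (\<lambda>t. L3 t + 4 * L2 t + 5 * L1 t + 2 * L0 t - 0) sequentially"
    unfolding CC_def[abs_def] by (intro uniform_limit_intros L hp2)
  have cA: "continuous_on ?U (\<lambda>t. L1 t + L0 t)" by (intro continuous_intros cL)
  have cB: "continuous_on ?U (\<lambda>t. L2 t + 3 * L1 t + 2 * L0 t - 0)" by (intro continuous_intros cL)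
  have cC: "continuous_on ?U (\<lambda>t. L3 t + 4 * L2 t + 5 * L1 t + 2 * L0 t - 0)" by (intro continuous_intros cL)
  have hCA: "uniform_limit ?U (\<lambda>n t. CC n t * AA n t) (\<lambda>t. (L3 t + 4 * L2 t + 5 * L1 t + 2 * L0 t - 0) * (L1 t + L0 t)) sequentially"
    by (rule ul_mult[OF hC hA cC cA])
  have hBB: "uniform_limit ?U (\<lambda>n t. BB n t * BB n t) (\<lambda>t. (L2 t + 3 * L1 t + 2 * L0 t - 0) * (L2 t + 3 * L1 t + 2 * L0 t - 0)) sequentially"
    by (rule ul_mult[OF hB hB cB cB])
  have htBB: "uniform_limit ?U (\<lambda>n t. t * (BB n t * BB n t)) (\<lambda>t. t * ((L2 t + 3 * L1 t + 2 * L0 t - 0) * (L2 t + 3 * L1 t + 2 * L0 t - 0))) sequentially"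
    by (rule ul_mult[OF uniform_limit_const hBB]) (intro continuous_intros cL)+
  define E where "E = (\<lambda>t. (L3 t + 4 * L2 t + 5 * L1 t + 2 * L0 t - 0) * (L1 t + L0 t) - t * ((L2 t + 3 * L1 t + 2 * L0 t - 0) * (L2 t + 3 * L1 t + 2 * L0 t - 0)))"
  have hE: "uniform_limit ?U (\<lambda>n t. CC n t * AA n t - t * (BB n t)^2) E sequentially"
    using uniform_limit_minus[OF hCA htBB] unfolding E_def by (rule ul_eq) (auto simp: power2_eq_square)
  have cE: "continuous_on ?U E" unfolding E_def by (intro continuous_intros cL)
  have hS: "uniform_limit ?U (\<lambda>n t. sqrt (CC n t * AA n t - t * (BB n t)^2)) (\<lambda>t. sqrt (E t)) sequentially"
    by (rule ul_sqrt[OF hE])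
  have cS: "continuous_on ?U (\<lambda>t. sqrt (E t))" by (intro continuous_intros cE)
  have Abnd: "1 \<le> norm (L1 t + L0 t)" if "t \<in> ?U" for t
  proof -
    have u: "0 < 1 - t" "1 - t \<le> 1" using that assms by auto
    have "L1 t + L0 t = 1 / (1 - t)^2" unfolding L0_def L1_def using u
      by (simp add: divide_simps power2_eq_square)
    moreover have "(1 - t)^2 \<le> 1" using u by (simp add: power_le_one)
    moreover have "0 < (1 - t)^2" using u by simp
    ultimately show ?thesis by simp
  qed
  have hF: "uniform_limit ?U (\<lambda>n t. sqrt (CC n t * AA n t - t * (BB n t)^2) / AA n t) (\<lambda>t. sqrt (E t) / (L1 t + L0 t)) sequentially"
    by (rule uniform_lim_divide[OF hS hA bnd_cont[OF cS] Abnd]) auto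
  show ?thesis
  proof (rule ul_eq[OF hF])
    fix t assume t: "t \<in> ?U"
    define u where "u = 1 - t"
    have u: "0 < u" using t assms by (simp add: u_def)
    have tu: "t = 1 - u" by (simp add: u_def)
    have "E t = 2 / u^6" unfolding E_def L0_def L1_def L2_def L3_def tu using u
      by (simp add: field_simps) algebra
    moreover have s6: "sqrt (u^6) = u^3"
    proof -
      have "sqrt ((u^3)^2) = u^3" using u by (simp only: real_sqrt_abs) simp
      then show ?thesis by (simp flip: power_mult)
    qed
    ultimately have "sqrt (E t) = sqrt 2 / u^3" by (simp add: real_sqrt_divide)
    moreover have "L1 t + L0 t = 1 / u^2" unfolding L0_def L1_def tu using u by (simp add: field_simps power2_eq_square)
    ultimately have "sqrt (E t) / (L1 t + L0 t) = (sqrt 2 / u^3) / (1 / u^2)" by simp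
    also have "\<dots> = sqrt 2 / u" using u by (simp add: field_simps power2_eq_square power3_eq_cube)
    finally show "sqrt (E t) / (L1 t + L0 t) = sqrt 2 / (1 - t)" by (simp add: u_def)
  qed simp
qed



definition "al n = real (Suc n) / real n"
definition "be n = 1 / real n"

definition "GG n s = sqrt (s * ((al n * al n) * (SS 2 n s * SS 0 n s - SS 1 n s * SS 1 n s)
   - (al n * be n) * (SS 3 n s * SS 0 n s - SS 2 n s * SS 1 n s)
   + (be n * be n) * (SS 3 n s * SS 1 n s - SS 2 n s * SS 2 n s)))
   / (al n * SS 0 n s - be n * SS 1 n s)"

lemma region2_s:
  assumes "0 \<le> \<rho>" "\<rho> < 1"
  shows "uniform_limit {0..\<rho>} GG (\<lambda>s. s / (1 - s)) sequentially"
proof -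
  let ?U = "{0..\<rho>}"
  note L = ul_SS0[OF assms] ul_SS1[OF assms] ul_SS2[OF assms] ul_SS3[OF assms]
  note cL = cont_L[OF assms(2)]
  have ha: "uniform_limit ?U (\<lambda>n s. al n) (\<lambda>s. 1) sequentially"
    unfolding al_def by (rule ul_seq[OF LIMSEQ_Suc_n_over_n])
  have hb: "uniform_limit ?U (\<lambda>n s. be n) (\<lambda>s. 0) sequentially"
    unfolding be_def by (rule ul_seq[OF lim_1_over_n])
  have c1: "continuous_on ?U (\<lambda>s. 1::real)" "continuous_on ?U (\<lambda>s. 0::real)" by (intro continuous_intros)+
  have haa: "uniform_limit ?U (\<lambda>n s. al n * al n) (\<lambda>s. 1 * 1) sequentially" by (rule ul_mult[OF ha ha c1(1) c1(1)])
  have hab: "uniform_limit ?U (\<lambda>n s. al n * be n) (\<lambda>s. 1 * 0) sequentially" by (rule ul_mult[OF ha hb c1(1) c1(2)])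
  have hbb: "uniform_limit ?U (\<lambda>n s. be n * be n) (\<lambda>s. 0 * 0) sequentially" by (rule ul_mult[OF hb hb c1(2) c1(2)])
  have p20: "uniform_limit ?U (\<lambda>n s. SS 2 n s * SS 0 n s) (\<lambda>s. L2 s * L0 s) sequentially" by (rule ul_mult[OF L(3) L(1) cL(3) cL(1)])
  have p11: "uniform_limit ?U (\<lambda>n s. SS 1 n s * SS 1 n s) (\<lambda>s. L1 s * L1 s) sequentially" by (rule ul_mult[OF L(2) L(2) cL(2) cL(2)])
  have p30: "uniform_limit ?U (\<lambda>n s. SS 3 n s * SS 0 n s) (\<lambda>s. L3 s * L0 s) sequentially" by (rule ul_mult[OF L(4) L(1) cL(4) cL(1)])
  have p21: "uniform_limit ?U (\<lambda>n s. SS 2 n s * SS 1 n s) (\<lambda>s. L2 s * L1 s) sequentially" by (rule ul_mult[OF L(3) L(2) cL(3) cL(2)])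
  have p31: "uniform_limit ?U (\<lambda>n s. SS 3 n s * SS 1 n s) (\<lambda>s. L3 s * L1 s) sequentially" by (rule ul_mult[OF L(4) L(2) cL(4) cL(2)])
  have p22: "uniform_limit ?U (\<lambda>n s. SS 2 n s * SS 2 n s) (\<lambda>s. L2 s * L2 s) sequentially" by (rule ul_mult[OF L(3) L(3) cL(3) cL(3)])
  have hX: "uniform_limit ?U (\<lambda>n s. SS 2 n s * SS 0 n s - SS 1 n s * SS 1 n s) (\<lambda>s. L2 s * L0 s - L1 s * L1 s) sequentially"
    by (rule uniform_limit_minus[OF p20 p11])
  have hY: "uniform_limit ?U (\<lambda>n s. SS 3 n s * SS 0 n s - SS 2 n s * SS 1 n s) (\<lambda>s. L3 s * L0 s - L2 s * L1 s) sequentially"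
    by (rule uniform_limit_minus[OF p30 p21])
  have hZ: "uniform_limit ?U (\<lambda>n s. SS 3 n s * SS 1 n s - SS 2 n s * SS 2 n s) (\<lambda>s. L3 s * L1 s - L2 s * L2 s) sequentially"
    by (rule uniform_limit_minus[OF p31 p22])
  have cX: "continuous_on ?U (\<lambda>s. L2 s * L0 s - L1 s * L1 s)" by (intro continuous_intros cL)
  have cY: "continuous_on ?U (\<lambda>s. L3 s * L0 s - L2 s * L1 s)" by (intro continuous_intros cL)
  have cZ: "continuous_on ?U (\<lambda>s. L3 s * L1 s - L2 s * L2 s)" by (intro continuous_intros cL)
  have c11: "continuous_on ?U (\<lambda>s. 1 * 1::real)" "continuous_on ?U (\<lambda>s. 1 * 0::real)" "continuous_on ?U (\<lambda>s. 0 * 0::real)"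
    by (intro continuous_intros)+
  have hQ: "uniform_limit ?U (\<lambda>n s. (al n * al n) * (SS 2 n s * SS 0 n s - SS 1 n s * SS 1 n s)
   - (al n * be n) * (SS 3 n s * SS 0 n s - SS 2 n s * SS 1 n s)
   + (be n * be n) * (SS 3 n s * SS 1 n s - SS 2 n s * SS 2 n s))
     (\<lambda>s. (1 * 1) * (L2 s * L0 s - L1 s * L1 s) - (1 * 0) * (L3 s * L0 s - L2 s * L1 s)
       + (0 * 0) * (L3 s * L1 s - L2 s * L2 s)) sequentially"
    by (intro uniform_limit_add uniform_limit_minus ul_mult[OF haa hX c11(1) cX]
          ul_mult[OF hab hY c11(2) cY] ul_mult[OF hbb hZ c11(3) cZ])
  define X where "X = (\<lambda>s. L2 s * L0 s - L1 s * L1 s)"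
  have hQ': "uniform_limit ?U (\<lambda>n s. s * ((al n * al n) * (SS 2 n s * SS 0 n s - SS 1 n s * SS 1 n s)
   - (al n * be n) * (SS 3 n s * SS 0 n s - SS 2 n s * SS 1 n s)
   + (be n * be n) * (SS 3 n s * SS 1 n s - SS 2 n s * SS 2 n s))) (\<lambda>s. s * X s) sequentially"
    by (rule ul_eq[OF ul_mult[OF uniform_limit_const[where c="\<lambda>s. s"] hQ]]) (auto simp: X_def intro!: continuous_intros cL)
  have hS: "uniform_limit ?U (\<lambda>n s. sqrt (s * ((al n * al n) * (SS 2 n s * SS 0 n s - SS 1 n s * SS 1 n s)
   - (al n * be n) * (SS 3 n s * SS 0 n s - SS 2 n s * SS 1 n s)
   + (be n * be n) * (SS 3 n s * SS 1 n s - SS 2 n s * SS 2 n s)))) (\<lambda>s. sqrt (s * X s)) sequentially"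
    by (rule ul_sqrt[OF hQ'])
  have cS: "continuous_on ?U (\<lambda>s. sqrt (s * X s))" unfolding X_def by (intro continuous_intros cL)
  have hD: "uniform_limit ?U (\<lambda>n s. al n * SS 0 n s - be n * SS 1 n s) L0 sequentially"
    by (rule ul_eq[OF uniform_limit_minus[OF ul_mult[OF ha L(1) c1(1) cL(1)] ul_mult[OF hb L(2) c1(2) cL(2)]]]) auto
  have Dbnd: "1 \<le> norm (L0 s)" if "s \<in> ?U" for s
  proof -
    have u: "0 < 1 - s" "1 - s \<le> 1" using that assms by auto
    then show ?thesis unfolding L0_def by simp
  qed
  have hF: "uniform_limit ?U GG (\<lambda>s. sqrt (s * X s) / L0 s) sequentially"
    unfolding GG_def[abs_def] by (rule uniform_lim_divide[OF hS hD bnd_cont[OF cS] Dbnd]) auto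
  show ?thesis
  proof (rule ul_eq[OF hF])
    fix s assume s: "s \<in> ?U"
    define u where "u = 1 - s"
    have u: "0 < u" using s assms by (simp add: u_def)
    have s0: "0 \<le> s" using s by simp
    have su: "s = 1 - u" by (simp add: u_def)
    have "s * X s = (s / u^2)^2" unfolding X_def L0_def L1_def L2_def su using u
      by (simp add: field_simps) algebra
    then have "sqrt (s * X s) = s / u^2" using s0 u by simp
    moreover have "L0 s = 1 / u" unfolding L0_def u_def ..
    ultimately have "sqrt (s * X s) / L0 s = (s / u^2) / (1 / u)" by simp
    also have "\<dots> = s / u" using u by (simp add: field_simps power2_eq_square)
    finally show "sqrt (s * X s) / L0 s = s / (1 - s)" by (simp add: u_def)
  qed simp
qed



lemma curvK_GG:
  fixes x :: real
  assumes x: "1 < x^2" and n: "1 \<le> n"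
  shows "curvK n x = GG n (1 / x^2)"
proof -
  define t where "t = x^2"
  define s where "s = 1 / t"
  have t0: "0 < t" unfolding t_def using x by linarith
  have x0: "x \<noteq> 0" using x by (cases "x = 0") auto
  have n0: "real n \<noteq> 0" "0 < real n" using n by auto
  define P0 where "P0 = SS 0 n s"
  define P1 where "P1 = SS 1 n s"
  define P2 where "P2 = SS 2 n s"
  define P3 where "P3 = SS 3 n s"
  define a where "a = real (n+1) * P0 - P1"
  define b where "b = real (n+1) * real n * P0 - (real (n+1) + real n) * P1 + P2"
  define c where "c = real (n+1) * (real n)^2 * P0 - ((real n)^2 + 2 * real (n+1) * real n) * P1
     + (real (n+1) + 2 * real n) * P2 - P3"
  define Q where "Q = (al n * al n) * (P2 * P0 - P1 * P1) - (al n * be n) * (P3 * P0 - P2 * P1)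
     + (be n * be n) * (P3 * P1 - P2 * P2)"
  have hA: "FA n t = t^n * a" unfolding a_def P0_def P1_def s_def using FA_refl[of t n] t0 by simp
  have hB: "FB n t = t^n * b" unfolding b_def P0_def P1_def P2_def s_def using FB_refl[of t n] t0 by simp
  have hC: "FC n t = t^n * c" unfolding c_def P0_def P1_def P2_def P3_def s_def using FC_refl[of t n] t0 by simp
  have key: "c * a - b^2 = (real n)^2 * Q"
    unfolding a_def b_def c_def Q_def al_def be_def using n0
    by (simp add: field_simps) algebra
  have e1: "FC n t * FA n t - (FB n t)^2 = (t^n)^2 * (c*a - b^2)"
    unfolding hA hB hC by (simp add: algebra_simps power2_eq_square)
  have "(FC n t * FA n t - (FB n t)^2) / x^2 = (t^n * real n)^2 * (s * Q)"
    unfolding e1 key t_def[symmetric] s_def using t0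
    by (simp add: field_simps power2_eq_square)
  then have "sqrt ((FC n t * FA n t - (FB n t)^2) / x^2) = t^n * real n * sqrt (s * Q)"
    using t0 n0 by (simp add: real_sqrt_mult)
  moreover have "FA n t = (t^n * real n) * (al n * P0 - be n * P1)"
    unfolding hA a_def al_def be_def using n0 by (simp add: field_simps)
  moreover have "t^n * real n \<noteq> 0" using t0 n0 by simp
  ultimately have "curvK n x = sqrt (s * Q) / (al n * P0 - be n * P1)"
    unfolding curvK_form2[OF x0] t_def[symmetric] using t0 n0 by simp
  then show ?thesis unfolding GG_def Q_def P0_def P1_def P2_def P3_def s_def t_def .
qed

lemma FA1: "FA n 1 = real ((n+1)*(n+2)) / 2"
  by (induction n) (simp_all add: FA_def field_simps)

lemma FB1: "FB n 1 = real (n*(n+1)*(n+2)) / 3"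
  by (induction n) (simp_all add: FB_def field_simps)

lemma FC1: "FC n 1 = real (n*(n+1)*(n+2)*(3*n+1)) / 12"
  by (induction n) (simp_all add: FC_def field_simps power2_eq_square)

lemma curvK_pm1:
  fixes x :: real
  assumes "x^2 = 1"
  shows "curvK n x = (1/3) * sqrt (real (n * (n + 3)) / 2)"
proof -
  have x0: "x \<noteq> 0" using assms by auto
  define m where "m = real n"
  have m0: "0 \<le> m" by (simp add: m_def)
  have "FC n 1 * FA n 1 - (FB n 1)^2 = ((m+1)*(m+2)/6)^2 * (m*(m+3)/2)"
    unfolding FA1 FB1 FC1 m_def by (simp add: field_simps power2_eq_square)
  then have "sqrt ((FC n 1 * FA n 1 - (FB n 1)^2)) = sqrt (((m+1)*(m+2)/6)^2) * sqrt (m*(m+3)/2)"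
    by (simp only: real_sqrt_mult)
  also have "sqrt (((m+1)*(m+2)/6)^2) = (m+1)*(m+2)/6" using m0 by (simp only: real_sqrt_abs) simp
  finally have sq: "sqrt ((FC n 1 * FA n 1 - (FB n 1)^2)) = (m+1)*(m+2)/6 * sqrt (m*(m+3)/2)" .
  have fa: "FA n 1 = (m+1)*(m+2)/2" unfolding FA1 m_def by (simp add: algebra_simps)
  have "curvK n x = sqrt (FC n 1 * FA n 1 - (FB n 1)^2) / FA n 1"
    unfolding curvK_form2[OF x0] assms by simp
  also have "\<dots> = ((m+1)*(m+2)/6 * sqrt (m*(m+3)/2)) / ((m+1)*(m+2)/2)"
    by (subst sq, subst fa, rule refl)
  also have "\<dots> = (1/3) * sqrt (m*(m+3)/2)"
  proof -
    have gen: "(p/6 * r) / (p/2) = 1/3 * r" if "p \<noteq> 0" for p r :: real using that by (simp add: field_simps)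
    have "(m+1)*(m+2) \<noteq> 0" using m0 by simp
    from gen[OF this] show ?thesis .
  qed
  finally show ?thesis by (simp add: m_def)
qed

theorem theorem3:
  shows "(\<forall>S. compact S \<and> S \<subseteq> {x::real. \<bar>x\<bar> < 1} \<longrightarrow>
            uniform_limit S curvK (\<lambda>x. sqrt 2 / (1 - x^2)) sequentially)
       \<and> (\<forall>S. compact S \<and> S \<subseteq> {x::real. \<bar>x\<bar> > 1} \<longrightarrow>
            uniform_limit S curvK (\<lambda>x. 1 / (x^2 - 1)) sequentially)
       \<and> (\<forall>n. curvK n 1 = (1/3) * sqrt (real (n * (n + 3)) / 2)
             \<and> curvK n (-1) = (1/3) * sqrt (real (n * (n + 3)) / 2))"
proof (intro conjI allI impI)
  fix n show "curvK n 1 = (1/3) * sqrt (real (n * (n + 3)) / 2)" by (rule curvK_pm1) simp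
  show "curvK n (-1) = (1/3) * sqrt (real (n * (n + 3)) / 2)" by (rule curvK_pm1) simp
next
  fix S :: "real set" assume S: "compact S \<and> S \<subseteq> {x. \<bar>x\<bar> < 1}"
  show "uniform_limit S curvK (\<lambda>x. sqrt 2 / (1 - x^2)) sequentially"
  proof (cases "S = {}")
    case True then show ?thesis by (simp add: uniform_limit_sequentially_iff)
  next
    case False
    have "compact ((\<lambda>x. x^2) ` S)" using S by (intro compact_continuous_image continuous_intros) auto
    from compact_attains_sup[OF this] False obtain \<rho> where
      \<rho>: "\<rho> \<in> (\<lambda>x. x^2) ` S" "\<forall>y\<in>(\<lambda>x. x^2) ` S. y \<le> \<rho>" by blast
    then obtain x0 where x0: "x0 \<in> S" "\<rho> = x0^2" by blast
    have \<rho>1: "\<rho> < 1" using x0 S by (auto simp: abs_square_less_1)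
    have \<rho>0: "0 \<le> \<rho>" using x0 by simp
    have h: "(\<lambda>x. x^2) \<in> S \<rightarrow> {0..\<rho>}" using \<rho> by auto
    from uniform_limit_compose'[OF region1_t[OF \<rho>0 \<rho>1] h]
    show ?thesis by (rule ul_eq) (auto simp: curvK_AA)
  qed
next
  fix S :: "real set" assume S: "compact S \<and> S \<subseteq> {x. \<bar>x\<bar> > 1}"
  show "uniform_limit S curvK (\<lambda>x. 1 / (x^2 - 1)) sequentially"
  proof (cases "S = {}")
    case True then show ?thesis by (simp add: uniform_limit_sequentially_iff)
  next
    case False
    have x1: "1 < x^2" if "x \<in> S" for x
      using S that abs_square_le_1[of x] by auto
    have "compact ((\<lambda>x. x^2) ` S)" using S by (intro compact_continuous_image continuous_intros) auto
    from compact_attains_inf[OF this] False obtain m where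
      m: "m \<in> (\<lambda>x. x^2) ` S" "\<forall>y\<in>(\<lambda>x. x^2) ` S. m \<le> y" by blast
    then obtain x0 where x0: "x0 \<in> S" "m = x0^2" by blast
    have m1: "1 < m" using x0 x1 by simp
    define \<rho> where "\<rho> = 1 / m"
    have \<rho>1: "\<rho> < 1" using m1 by (simp add: \<rho>_def)
    have \<rho>0: "0 \<le> \<rho>" using m1 by (simp add: \<rho>_def)
    have h: "(\<lambda>x. 1 / x^2) \<in> S \<rightarrow> {0..\<rho>}"
    proof
      fix x assume "x \<in> S"
      then have "m \<le> x^2" using m by auto
      then show "1 / x^2 \<in> {0..\<rho>}" using m1 unfolding \<rho>_def by (auto simp: frac_le)
    qed
    have lim: "uniform_limit S (\<lambda>n x. GG n (1 / x^2)) (\<lambda>x. (1 / x^2) / (1 - 1 / x^2)) sequentially"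
      by (rule uniform_limit_compose'[OF region2_s[OF \<rho>0 \<rho>1] h])
    show ?thesis
    proof (rule iffD1[OF uniform_limit_cong lim])
      show "\<forall>\<^sub>F n in sequentially. \<forall>x\<in>S. GG n (1 / x^2) = curvK n x"
        using eventually_ge_at_top[of "1::nat"]
        by eventually_elim (auto simp: curvK_GG x1)
      fix x assume "x \<in> S"
      then have "1 < x^2" by (rule x1)
      moreover have "x \<noteq> 0" using \<open>1 < x^2\<close> by (cases "x = 0") auto
      ultimately show "1 / x^2 / (1 - 1 / x^2) = 1 / (x^2 - 1)" by (simp add: field_simps)
    qed
  qed
qed

end
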